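(* Let $A$ be a fuzzy ideal in a fuzzy Riesz space $(E,\mu)$, and let $E/A$ carry the quotient fuzzy order described in the context. The following are equivalent: (1) $E/A$ is a fuzzy Archimedean space; (2) $A$ is uniformly fuzzy closed; (3) whenever $\{x_n\}\subseteq A$ with $\mu(0,x_n)>\frac12$ for all $n$, the sequence $\{x_n\}$ is increasing and converges relatively uniformly in fuzzy order to $x\in E$, then $x\in A$; (4) whenever $x,w\in E^+$ and $(nx-w)^+\in A$ for all $n=1,2,\dots$, then $x\in A$.
   Context: A fuzzy order on a real vector space $E$ is a map $\mu:E\times E\to[0,1]$ with $\mu(x,x)=1$; $\mu(x,y)+\mu(y,x)>1$ implies $x=y$; and $\mu(x,z)\ge\sup_{y}\min(\mu(x,y),\mu(y,z))$. Write $x\le y$ for $\mu(x,y)>\frac12$; upper bounds, suprema and infima are taken with respect to this relation. $(E,\mu)$ is a fuzzy ordered linear space if $\mu(x_1,x_2)>\frac12$ implies $\mu(x_1,x_2)\le\mu(x_1+x,x_2+x)$ for all $x$ and $\mu(x_1,x_2)\le\mu(\alpha x_1,\alpha x_2)$ for all $\alpha>0$; it is a fuzzy Riesz space if $x\vee y=\sup\{x,y\}$ and $x\wedge y=\inf\{x,y\}$ exist for all $x,y$. $E^+=\{x:0\le x\}$, $x^+=x\vee0$, $|x|=x\vee(-x)$. A fuzzy ideal is a vector subspace $A$ such that $\mu(|x|,|y|)>\frac12$ and $y\in A$ imply $x\in A$. For $f\in E$, $[f]=f+A$; on the quotient vector space $E/A$ put $\nu([f],[g])=1$ if $[f]=[g]$,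 $\nu([f],[g])=\frac23$ if $[f]\neq[g]$ and there exist $f_1\in[f]$, $g_1\in[g]$ with $\mu(f_1,g_1)>\frac12$, and $\nu([f],[g])=0$ otherwise; $(E/A,\nu)$ is a fuzzy Riesz space. A fuzzy ordered vector space (in which every pair of elements has an upper bound) is fuzzy Archimedean if for every nonzero $x$ with $0\le x$ the set $\{\lambda x:\lambda>0\}$ is not bounded above. A sequence $\{x_n\}$ converges relatively uniformly in fuzzy order to $x$ if there is $w\in E^+$ such that for every $\varepsilon>0$ there is $n(\varepsilon)$ with $\mu(|x-x_n|,\varepsilon w)>\frac12$ for all $n>n(\varepsilon)$. A set $A$ is uniformly fuzzy closed if it contains the limit of every sequence in $A$ converging relatively uniformly in fuzzy order. *)

theory Defs
  imports Main "HOL-Analysis.Analysis"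
begin

definition fuzzy_order :: "('a \<Rightarrow> 'a \<Rightarrow> real) \<Rightarrow> bool" where
  "fuzzy_order \<mu> \<longleftrightarrow>
     (\<forall>x y. 0 \<le> \<mu> x y \<and> \<mu> x y \<le> 1) \<and>
     (\<forall>x. \<mu> x x = 1) \<and>
     (\<forall>x y. \<mu> x y + \<mu> y x > 1 \<longrightarrow> x = y) \<and>
     (\<forall>x z. (SUP y. min (\<mu> x y) (\<mu> y z)) \<le> \<mu> x z)"

definition fle :: "('a \<Rightarrow> 'a \<Rightarrow> real) \<Rightarrow> 'a \<Rightarrow> 'a \<Rightarrow> bool" where
  "fle \<mu> x y \<longleftrightarrow> \<mu> x y > 1/2"

definition fuzzy_ordered_linear_space :: "('a::real_vector \<Rightarrow> 'a \<Rightarrow> real) \<Rightarrow> bool" where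
  "fuzzy_ordered_linear_space \<mu> \<longleftrightarrow> fuzzy_order \<mu> \<and>
     (\<forall>x1 x2. \<mu> x1 x2 > 1/2 \<longrightarrow>
        (\<forall>x. \<mu> x1 x2 \<le> \<mu> (x1 + x) (x2 + x)) \<and>
        (\<forall>\<alpha>::real. \<alpha> > 0 \<longrightarrow> \<mu> x1 x2 \<le> \<mu> (\<alpha> *\<^sub>R x1) (\<alpha> *\<^sub>R x2)))"

definition is_fsup :: "('a \<Rightarrow> 'a \<Rightarrow> real) \<Rightarrow> 'a set \<Rightarrow> 'a \<Rightarrow> bool" where
  "is_fsup \<mu> S s \<longleftrightarrow> (\<forall>x\<in>S. fle \<mu> x s) \<and> (\<forall>u. (\<forall>x\<in>S. fle \<mu> x u) \<longrightarrow> fle \<mu> s u)"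

definition is_finf :: "('a \<Rightarrow> 'a \<Rightarrow> real) \<Rightarrow> 'a set \<Rightarrow> 'a \<Rightarrow> bool" where
  "is_finf \<mu> S s \<longleftrightarrow> (\<forall>x\<in>S. fle \<mu> s x) \<and> (\<forall>u. (\<forall>x\<in>S. fle \<mu> u x) \<longrightarrow> fle \<mu> u s)"

definition fuzzy_riesz_space :: "('a::real_vector \<Rightarrow> 'a \<Rightarrow> real) \<Rightarrow> bool" where
  "fuzzy_riesz_space \<mu> \<longleftrightarrow> fuzzy_ordered_linear_space \<mu> \<and>
     (\<forall>x y. (\<exists>s. is_fsup \<mu> {x, y} s) \<and> (\<exists>i. is_finf \<mu> {x, y} i))"

definition fsup :: "('a \<Rightarrow> 'a \<Rightarrow> real) \<Rightarrow> 'a \<Rightarrow> 'a \<Rightarrow> 'a" where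
  "fsup \<mu> x y = (THE s. is_fsup \<mu> {x, y} s)"

definition fpos :: "('a::real_vector \<Rightarrow> 'a \<Rightarrow> real) \<Rightarrow> 'a \<Rightarrow> 'a" where
  "fpos \<mu> x = fsup \<mu> x 0"

definition fabs :: "('a::real_vector \<Rightarrow> 'a \<Rightarrow> real) \<Rightarrow> 'a \<Rightarrow> 'a" where
  "fabs \<mu> x = fsup \<mu> x (- x)"

definition fuzzy_ideal :: "('a::real_vector \<Rightarrow> 'a \<Rightarrow> real) \<Rightarrow> 'a set \<Rightarrow> bool" where
  "fuzzy_ideal \<mu> A \<longleftrightarrow> subspace A \<and>
     (\<forall>x y. \<mu> (fabs \<mu> x) (fabs \<mu> y) > 1/2 \<and> y \<in> A \<longrightarrow> x \<in> A)"

definition coset :: "'a::real_vector set \<Rightarrow> 'a \<Rightarrow> 'a set" where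
  "coset A f = {f + a | a. a \<in> A}"

definition quot_space :: "'a::real_vector set \<Rightarrow> 'a set set" where
  "quot_space A = range (coset A)"

definition quot_mu :: "('a \<Rightarrow> 'a \<Rightarrow> real) \<Rightarrow> 'a set \<Rightarrow> 'a set \<Rightarrow> real" where
  "quot_mu \<mu> X Y = (if X = Y then 1
      else if \<exists>f1\<in>X. \<exists>g1\<in>Y. \<mu> f1 g1 > 1/2 then 2/3 else 0)"

definition fuzzy_archimedean_on ::
  "'b set \<Rightarrow> 'b \<Rightarrow> (real \<Rightarrow> 'b \<Rightarrow> 'b) \<Rightarrow> ('b \<Rightarrow> 'b \<Rightarrow> real) \<Rightarrow> bool" where
  "fuzzy_archimedean_on S z sm \<nu> \<longleftrightarrow>
     (\<forall>x\<in>S. x \<noteq> z \<and> \<nu> z x > 1/2 \<longrightarrow>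
        \<not> (\<exists>u\<in>S. \<forall>l::real. l > 0 \<longrightarrow> \<nu> (sm l x) u > 1/2))"

definition quot_archimedean :: "('a::real_vector \<Rightarrow> 'a \<Rightarrow> real) \<Rightarrow> 'a set \<Rightarrow> bool" where
  "quot_archimedean \<mu> A \<longleftrightarrow>
     fuzzy_archimedean_on (quot_space A) (coset A 0)
        (\<lambda>l X. (\<lambda>v. l *\<^sub>R v) ` X) (quot_mu \<mu>)"

definition ru_converges :: "('a::real_vector \<Rightarrow> 'a \<Rightarrow> real) \<Rightarrow> (nat \<Rightarrow> 'a) \<Rightarrow> 'a \<Rightarrow> bool" where
  "ru_converges \<mu> xs x \<longleftrightarrow> (\<exists>w. fle \<mu> 0 w \<and>
     (\<forall>\<epsilon>::real. \<epsilon> > 0 \<longrightarrow> (\<exists>N. \<forall>n>N. \<mu> (fabs \<mu> (x - xs n)) (\<epsilon> *\<^sub>R w) > 1/2)))"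

definition uniformly_fuzzy_closed :: "('a::real_vector \<Rightarrow> 'a \<Rightarrow> real) \<Rightarrow> 'a set \<Rightarrow> bool" where
  "uniformly_fuzzy_closed \<mu> A \<longleftrightarrow>
     (\<forall>xs x. (\<forall>n. xs n \<in> A) \<and> ru_converges \<mu> xs x \<longrightarrow> x \<in> A)"

end

theory Submission
  imports Defs
begin

locale frs =
  fixes mu :: "'a::real_vector \<Rightarrow> 'a \<Rightarrow> real"
  assumes R: "fuzzy_riesz_space mu"
begin

lemma FO: "fuzzy_order mu"
  using R unfolding fuzzy_riesz_space_def fuzzy_ordered_linear_space_def by auto

lemma OLS1: "mu x y > 1/2 \<Longrightarrow> mu x y \<le> mu (x+z) (y+z)"
  using R unfolding fuzzy_riesz_space_def fuzzy_ordered_linear_space_def by blast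

lemma OLS2: "mu x y > 1/2 \<Longrightarrow> a > 0 \<Longrightarrow> mu x y \<le> mu (a *\<^sub>R x) (a *\<^sub>R y)"
  using R unfolding fuzzy_riesz_space_def fuzzy_ordered_linear_space_def by blast

lemma frefl: "fle mu x x"
  using FO unfolding fuzzy_order_def fle_def by auto

lemma fantisym: "fle mu x y \<Longrightarrow> fle mu y x \<Longrightarrow> x = y"
  using FO unfolding fuzzy_order_def fle_def by force

lemma ftrans: assumes "fle mu x y" "fle mu y z" shows "fle mu x z"
proof -
  have b: "bdd_above (range (\<lambda>y. min (mu x y) (mu y z)))"
    by (rule bdd_aboveI[of _ 1]) (use FO in \<open>auto simp: fuzzy_order_def min_le_iff_disj\<close>)
  have "min (mu x y) (mu y z) \<le> (SUP y. min (mu x y) (mu y z))" by (rule cSUP_upper[OF _ b]) simp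
  also have "\<dots> \<le> mu x z" using FO unfolding fuzzy_order_def by auto
  finally show ?thesis using assms unfolding fle_def by simp
qed

lemma fadd: assumes "fle mu x y" shows "fle mu (x+z) (y+z)"
  using assms OLS1[of x y z] unfolding fle_def by linarith

lemma fscale: assumes "fle mu x y" "0 \<le> a" shows "fle mu (a *\<^sub>R x) (a *\<^sub>R y)"
proof (cases "a = 0")
  case True then show ?thesis by (simp add: frefl)
next
  case False
  then have "a > 0" using assms by simp
  then show ?thesis using assms OLS2[of x y a] unfolding fle_def by linarith
qed

lemma fadd2: assumes "fle mu x y" "fle mu u v" shows "fle mu (x+u) (y+v)"
proof -
  have "fle mu (x+u) (y+u)" using fadd assms by blast
  moreover have "fle mu (u+y) (v+y)" using fadd assms by blast
  ultimately show ?thesis using ftrans by (simp add: add.commute)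
qed

lemma fle_diff: "fle mu x y \<longleftrightarrow> fle mu 0 (y - x)"
proof
  assume "fle mu x y" then have "fle mu (x + - x) (y + - x)" by (rule fadd)
  then show "fle mu 0 (y - x)" by simp
next
  assume "fle mu 0 (y - x)" then have "fle mu (0 + x) (y - x + x)" by (rule fadd)
  then show "fle mu x y" by simp
qed

lemma fneg: assumes "fle mu x y" shows "fle mu (-y) (-x)"
proof -
  have "fle mu (x + (-x-y)) (y + (-x-y))" by (rule fadd[OF assms])
  then show ?thesis by (simp add: algebra_simps)
qed

lemma sup_is: "is_fsup mu {x,y} (fsup mu x y)"
proof -
  obtain s where s: "is_fsup mu {x,y} s" using R unfolding fuzzy_riesz_space_def by blast
  have uniq: "\<And>t. is_fsup mu {x,y} t \<Longrightarrow> t = s"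
    using s fantisym unfolding is_fsup_def by blast
  show ?thesis using theI[where P="\<lambda>t. is_fsup mu {x,y} t", OF s uniq] unfolding fsup_def by simp
qed

lemma sup_ge1: "fle mu x (fsup mu x y)" using sup_is unfolding is_fsup_def by blast
lemma sup_ge2: "fle mu y (fsup mu x y)" using sup_is unfolding is_fsup_def by blast
lemma sup_least: "fle mu x u \<Longrightarrow> fle mu y u \<Longrightarrow> fle mu (fsup mu x y) u"
  using sup_is unfolding is_fsup_def by blast

lemma sup_unique: assumes "is_fsup mu {x,y} s" shows "fsup mu x y = s"
  using assms sup_is fantisym unfolding is_fsup_def by blast

lemma sup_eq: assumes "fle mu y x" shows "fsup mu x y = x"
  by (rule sup_unique) (use assms frefl in \<open>auto simp: is_fsup_def\<close>)

lemma sup_scale: assumes "0 < a" shows "fsup mu (a *\<^sub>R x) (a *\<^sub>R y) = a *\<^sub>R fsup mu x y"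
proof (rule sup_unique, unfold is_fsup_def, intro conjI ballI allI impI)
  fix z assume "z \<in> {a *\<^sub>R x, a *\<^sub>R y}"
  then show "fle mu z (a *\<^sub>R fsup mu x y)" using fscale sup_ge1 sup_ge2 assms by auto
next
  fix u assume u: "\<forall>z\<in>{a *\<^sub>R x, a *\<^sub>R y}. fle mu z u"
  have h1: "fle mu (a *\<^sub>R x) u" "fle mu (a *\<^sub>R y) u" using u by auto
  have "fle mu ((1/a) *\<^sub>R (a *\<^sub>R x)) ((1/a) *\<^sub>R u)" by (rule fscale[OF h1(1)]) (use assms in simp)
  then have "fle mu x ((1/a) *\<^sub>R u)" using assms by simp
  moreover have "fle mu ((1/a) *\<^sub>R (a *\<^sub>R y)) ((1/a) *\<^sub>R u)" by (rule fscale[OF h1(2)]) (use assms in simp)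
  then have "fle mu y ((1/a) *\<^sub>R u)" using assms by simp
  ultimately have "fle mu (fsup mu x y) ((1/a) *\<^sub>R u)" using assms by (auto intro: sup_least)
  then have "fle mu (a *\<^sub>R fsup mu x y) (a *\<^sub>R ((1/a) *\<^sub>R u))" by (rule fscale) (use assms in simp)
  then show "fle mu (a *\<^sub>R fsup mu x y) u" using assms by simp
qed

lemma sup_mono: "fle mu x x' \<Longrightarrow> fle mu y y' \<Longrightarrow> fle mu (fsup mu x y) (fsup mu x' y')"
  by (meson ftrans sup_ge1 sup_ge2 sup_least)

lemma abs_ge1: "fle mu x (fabs mu x)" unfolding fabs_def by (rule sup_ge1)
lemma abs_ge2: "fle mu (-x) (fabs mu x)" unfolding fabs_def by (rule sup_ge2)

lemma abs_nonneg: "fle mu 0 (fabs mu x)"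
proof -
  have "fle mu (x + -x) (fabs mu x + fabs mu x)" by (rule fadd2[OF abs_ge1 abs_ge2])
  then have h: "fle mu 0 (2 *\<^sub>R fabs mu x)" by (simp add: scaleR_2)
  have "fle mu ((1/2) *\<^sub>R 0) ((1/2) *\<^sub>R (2 *\<^sub>R fabs mu x))"
    by (rule fscale[OF h]) simp
  then show ?thesis by simp
qed

lemma abs_pos_eq: assumes "fle mu 0 x" shows "fabs mu x = x"
proof -
  have "fle mu (-x) 0" using fneg[OF assms] by simp
  then have "fle mu (-x) x" using assms ftrans by blast
  then show ?thesis unfolding fabs_def by (rule sup_eq)
qed

lemma abs_abs: "fabs mu (fabs mu x) = fabs mu x" by (rule abs_pos_eq[OF abs_nonneg])

lemma abs_triangle: "fle mu (fabs mu (a+b)) (fabs mu a + fabs mu b)"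
  unfolding fabs_def[of _ "a+b"]
proof (rule sup_least)
  show "fle mu (a + b) (fabs mu a + fabs mu b)" by (rule fadd2[OF abs_ge1 abs_ge1])
  have "fle mu (-a + -b) (fabs mu a + fabs mu b)" by (rule fadd2[OF abs_ge2 abs_ge2])
  then show "fle mu (- (a + b)) (fabs mu a + fabs mu b)" by simp
qed

lemma pos_ge0: "fle mu 0 (fpos mu x)" unfolding fpos_def by (rule sup_ge2)
lemma pos_ge: "fle mu x (fpos mu x)" unfolding fpos_def by (rule sup_ge1)
lemma pos_le_abs: "fle mu (fpos mu x) (fabs mu x)"
  unfolding fpos_def by (rule sup_least[OF abs_ge1 abs_nonneg])

lemma ideal_le: assumes I: "fuzzy_ideal mu A" and "c \<in> A" "fle mu 0 y" "fle mu y (fabs mu c)"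
  shows "y \<in> A"
proof -
  have d: "\<And>x y. mu (fabs mu x) (fabs mu y) > 1/2 \<Longrightarrow> y \<in> A \<Longrightarrow> x \<in> A"
    using I unfolding fuzzy_ideal_def by blast
  have "mu (fabs mu y) (fabs mu c) > 1/2" using assms(4) abs_pos_eq[OF assms(3)] unfolding fle_def by simp
  then show ?thesis using d assms(2) by blast
qed

lemma ideal_abs: assumes I: "fuzzy_ideal mu A" and "fabs mu x \<in> A" shows "x \<in> A"
proof -
  have d: "\<And>x y. mu (fabs mu x) (fabs mu y) > 1/2 \<Longrightarrow> y \<in> A \<Longrightarrow> x \<in> A"
    using I unfolding fuzzy_ideal_def by blast
  have "mu (fabs mu x) (fabs mu (fabs mu x)) > 1/2" using abs_abs[of x] frefl[of "fabs mu x"] unfolding fle_def by simp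
  then show ?thesis using d assms(2) by blast
qed

lemma ideal_abs2: assumes I: "fuzzy_ideal mu A" and "x \<in> A" shows "fabs mu x \<in> A"
  using ideal_le[OF I assms(2) abs_nonneg frefl] .

end

lemma mem_coset: "y \<in> coset A f \<longleftrightarrow> y - f \<in> A"
  unfolding coset_def by (auto intro!: exI[of _ "y - f"])

lemma coset_eq: assumes "subspace A" shows "coset A f = coset A g \<longleftrightarrow> f - g \<in> A"
proof
  assume "coset A f = coset A g"
  moreover have "f \<in> coset A f" using assms by (simp add: mem_coset subspace_0)
  ultimately show "f - g \<in> A" by (simp add: mem_coset)
next
  assume h: "f - g \<in> A"
  have "y - f \<in> A \<longleftrightarrow> y - g \<in> A" for y
  proof -
    have "y - g = (y - f) + (f - g)" "y - f = (y - g) - (f - g)" by simp_all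
    then show ?thesis using h assms by (metis subspace_add subspace_diff)
  qed
  then show "coset A f = coset A g" by (auto simp: mem_coset)
qed

lemma coset_scale: assumes "subspace A" "l \<noteq> 0"
  shows "(\<lambda>v. l *\<^sub>R v) ` coset A f = coset A (l *\<^sub>R f)"
proof
  show "(\<lambda>v. l *\<^sub>R v) ` coset A f \<subseteq> coset A (l *\<^sub>R f)"
  proof
    fix y assume "y \<in> (\<lambda>v. l *\<^sub>R v) ` coset A f"
    then obtain v where v: "v - f \<in> A" "y = l *\<^sub>R v" by (auto simp: mem_coset)
    then have "l *\<^sub>R (v - f) \<in> A" using assms subspace_scale by blast
    then show "y \<in> coset A (l *\<^sub>R f)" using v by (simp add: mem_coset scaleR_diff_right)
  qed
next
  show "coset A (l *\<^sub>R f) \<subseteq> (\<lambda>v. l *\<^sub>R v) ` coset A f"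
  proof
    fix y assume "y \<in> coset A (l *\<^sub>R f)"
    then have "y - l *\<^sub>R f \<in> A" by (simp add: mem_coset)
    then have "(1/l) *\<^sub>R (y - l *\<^sub>R f) \<in> A" using assms subspace_scale by blast
    then have "(1/l) *\<^sub>R y - f \<in> A" using assms by (simp add: scaleR_diff_right)
    moreover have "y = l *\<^sub>R ((1/l) *\<^sub>R y)" using assms by simp
    ultimately show "y \<in> (\<lambda>v. l *\<^sub>R v) ` coset A f"
      by (intro image_eqI[of _ _ "(1/l) *\<^sub>R y"]) (auto simp: mem_coset)
  qed
qed

lemma coset0: "subspace A \<Longrightarrow> coset A 0 = A"
  by (auto simp: mem_coset)

lemma quot_mu_gt: "quot_mu mu X Y > 1/2 \<Longrightarrow> X = Y \<or> (\<exists>f1\<in>X. \<exists>g1\<in>Y. mu f1 g1 > 1/2)"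
  by (auto simp: quot_mu_def split: if_splits)

lemma quot_mu_gtI: "\<exists>f1\<in>X. \<exists>g1\<in>Y. mu f1 g1 > 1/2 \<Longrightarrow> quot_mu mu X Y > 1/2"
  by (auto simp: quot_mu_def)

context frs
begin

lemma fle_sub: assumes "fle mu a b" shows "fle mu (x - b) (x - a)"
proof -
  have "fle mu (-b + x) (-a + x)" by (rule fadd[OF fneg[OF assms]])
  then show ?thesis by (simp add: algebra_simps)
qed

lemma imp12:
  assumes I: "fuzzy_ideal mu A" and Q: "quot_archimedean mu A"
  shows "uniformly_fuzzy_closed mu A"
  unfolding uniformly_fuzzy_closed_def
proof (intro allI impI, elim conjE)
  fix xs x assume xA: "\<forall>n. xs n \<in> A" and rc: "ru_converges mu xs x"
  have S: "subspace A" using I unfolding fuzzy_ideal_def by blast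
  obtain w where w0: "fle mu 0 w" and conv: "\<And>e. e > 0 \<Longrightarrow> \<exists>N. \<forall>n>N. mu (fabs mu (x - xs n)) (e *\<^sub>R w) > 1/2"
    using rc unfolding ru_converges_def by blast
  have "fabs mu x \<in> A"
  proof (rule ccontr)
    assume nA: "fabs mu x \<notin> A"
    define X where "X = coset A (fabs mu x)"
    have XS: "X \<in> quot_space A" unfolding X_def quot_space_def by simp
    have Xne: "X \<noteq> coset A 0"
    proof
      assume "X = coset A 0"
      then have "fabs mu x - 0 \<in> A" unfolding X_def by (rule coset_eq[OF S, THEN iffD1])
      then show False using nA by simp
    qed
    have "0 \<in> coset A 0" "fabs mu x \<in> coset A (fabs mu x)" by (simp_all add: mem_coset subspace_0 S)
    then have "quot_mu mu (coset A 0) X > 1/2" using abs_nonneg[of x] unfolding X_def fle_def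
      by (intro quot_mu_gtI) blast
    then have nb: "\<not> (\<exists>u\<in>quot_space A. \<forall>l::real. l > 0 \<longrightarrow>
        quot_mu mu ((\<lambda>v. l *\<^sub>R v) ` X) u > 1/2)"
    proof -
      have "\<forall>x\<in>quot_space A. x \<noteq> coset A 0 \<and> quot_mu mu (coset A 0) x > 1/2 \<longrightarrow>
        \<not> (\<exists>u\<in>quot_space A. \<forall>l::real. l > 0 \<longrightarrow> quot_mu mu ((\<lambda>v. l *\<^sub>R v) ` x) u > 1/2)"
        using Q unfolding quot_archimedean_def fuzzy_archimedean_on_def .
      note bspec[OF this XS]
      then show ?thesis using Xne \<open>quot_mu mu (coset A 0) X > 1/2\<close> by blast
    qed
    have "\<forall>l::real. l > 0 \<longrightarrow> quot_mu mu ((\<lambda>v. l *\<^sub>R v) ` X) (coset A w) > 1/2"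
    proof (intro allI impI)
      fix l :: real assume l: "l > 0"
      obtain N where N: "\<forall>n>N. mu (fabs mu (x - xs n)) ((1/l) *\<^sub>R w) > 1/2"
        using conv[of "1/l"] l by auto
      define y where "y = xs (Suc N)"
      have yA: "y \<in> A" using xA y_def by simp
      have h: "fle mu (fabs mu (x - y)) ((1/l) *\<^sub>R w)" using N unfolding y_def fle_def by simp
      have "fle mu (fabs mu ((x - y) + y)) (fabs mu (x - y) + fabs mu y)" by (rule abs_triangle)
      moreover have "fle mu (fabs mu (x - y) + fabs mu y) ((1/l) *\<^sub>R w + fabs mu y)"
        by (rule fadd[OF h])
      ultimately have "fle mu (fabs mu ((x - y) + y)) ((1/l) *\<^sub>R w + fabs mu y)" by (rule ftrans)
      then have "fle mu (fabs mu x) ((1/l) *\<^sub>R w + fabs mu y)" by simp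
      then have "fle mu (fabs mu x + - fabs mu y) ((1/l) *\<^sub>R w + fabs mu y + - fabs mu y)"
        by (rule fadd)
      then have "fle mu (fabs mu x - fabs mu y) ((1/l) *\<^sub>R w)" by simp
      then have "fle mu (l *\<^sub>R (fabs mu x - fabs mu y)) (l *\<^sub>R ((1/l) *\<^sub>R w))"
        by (rule fscale) (use l in simp)
      then have le: "fle mu (l *\<^sub>R fabs mu x - l *\<^sub>R fabs mu y) w"
        using l by (simp add: scaleR_diff_right)
      have "l *\<^sub>R fabs mu y \<in> A" using ideal_abs2[OF I yA] S subspace_scale by blast
      then have mem: "l *\<^sub>R fabs mu x - l *\<^sub>R fabs mu y \<in> coset A (l *\<^sub>R fabs mu x)"
        using S by (simp add: mem_coset subspace_neg)
      have img: "(\<lambda>v. l *\<^sub>R v) ` X = coset A (l *\<^sub>R fabs mu x)"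
        unfolding X_def by (rule coset_scale[OF S]) (use l in linarith)
      have wm: "w \<in> coset A w" using S by (simp add: mem_coset subspace_0)
      show "quot_mu mu ((\<lambda>v. l *\<^sub>R v) ` X) (coset A w) > 1/2"
        unfolding img using mem wm le unfolding fle_def by (intro quot_mu_gtI) blast
    qed
    moreover have "coset A w \<in> quot_space A" unfolding quot_space_def by simp
    ultimately show False using nb by blast
  qed
  then show "x \<in> A" by (rule ideal_abs[OF I])
qed

lemma imp34:
  assumes I: "fuzzy_ideal mu A"
    and H: "\<forall>xs x. (\<forall>n. xs n \<in> A) \<and> (\<forall>n. mu 0 (xs n) > 1/2)
                    \<and> (\<forall>m n. m \<le> n \<longrightarrow> fle mu (xs m) (xs n))
                    \<and> ru_converges mu xs x \<longrightarrow> x \<in> A"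
  shows "\<forall>x w. fle mu 0 x \<and> fle mu 0 w
                  \<and> (\<forall>n::nat. n \<ge> 1 \<longrightarrow> fpos mu (real n *\<^sub>R x - w) \<in> A) \<longrightarrow> x \<in> A"
proof (intro allI impI, elim conjE)
  fix x w assume x0: "fle mu 0 x" and w0: "fle mu 0 w"
    and P: "\<forall>n::nat. n \<ge> 1 \<longrightarrow> fpos mu (real n *\<^sub>R x - w) \<in> A"
  have S: "subspace A" using I unfolding fuzzy_ideal_def by blast
  define c where "c n = 1 / real (Suc n)" for n
  have c0: "c n > 0" for n unfolding c_def by simp
  define xs where "xs n = fpos mu (x - c n *\<^sub>R w)" for n
  have cw: "fle mu (a *\<^sub>R w) (b *\<^sub>R w)" if "a \<le> b" for a b
  proof -
    have "fle mu ((b - a) *\<^sub>R 0) ((b - a) *\<^sub>R w)" by (rule fscale[OF w0]) (use that in simp)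
    then show ?thesis by (simp add: fle_diff[of "a *\<^sub>R w"] scaleR_diff_left)
  qed
  have xsA: "xs n \<in> A" for n
  proof -
    have "real (Suc n) *\<^sub>R (x - c n *\<^sub>R w) = real (Suc n) *\<^sub>R x - w"
      unfolding c_def by (simp add: scaleR_diff_right)
    moreover have "fsup mu (real (Suc n) *\<^sub>R (x - c n *\<^sub>R w)) (real (Suc n) *\<^sub>R 0)
       = real (Suc n) *\<^sub>R fsup mu (x - c n *\<^sub>R w) 0"
      by (rule sup_scale) simp
    ultimately have eq: "fpos mu (real (Suc n) *\<^sub>R x - w) = real (Suc n) *\<^sub>R xs n"
      unfolding xs_def fpos_def by simp
    have "fpos mu (real (Suc n) *\<^sub>R x - w) \<in> A" using spec[OF P, of "Suc n"] by simp
    then have "real (Suc n) *\<^sub>R xs n \<in> A" unfolding eq .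
    then have "(1 / real (Suc n)) *\<^sub>R (real (Suc n) *\<^sub>R xs n) \<in> A"
      by (rule subspace_scale[OF S])
    then show ?thesis by simp
  qed
  have pos: "mu 0 (xs n) > 1/2" for n using pos_ge0 unfolding xs_def fle_def by blast
  have mono: "fle mu (xs m) (xs n)" if "m \<le> n" for m n
  proof -
    have "c n \<le> c m" unfolding c_def using that by (simp add: frac_le)
    then have "fle mu (x - c m *\<^sub>R w) (x - c n *\<^sub>R w)"
      by (intro fle_sub cw)
    then show ?thesis unfolding xs_def fpos_def by (rule sup_mono[OF _ frefl])
  qed
  have rc: "ru_converges mu xs x"
    unfolding ru_converges_def
  proof (intro exI[of _ w] conjI allI impI)
    show "fle mu 0 w" by fact
    fix e :: real assume e: "e > 0"
    obtain N :: nat where N: "1 / e < real N" using reals_Archimedean2 by blast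
    show "\<exists>N. \<forall>n>N. mu (fabs mu (x - xs n)) (e *\<^sub>R w) > 1/2"
    proof (intro exI[of _ N] allI impI)
      fix n assume n: "n > N"
      have ce: "c n \<le> e"
      proof -
        have "1 / e < real (Suc n)" using N n by linarith
        then have "1 < e * real (Suc n)" using e by (simp add: field_simps)
        then show ?thesis unfolding c_def using e by (simp add: field_simps)
      qed
      have a1: "fle mu (x - c n *\<^sub>R w) x"
        using fle_sub[OF cw[of 0 "c n"], of x] c0[of n] by simp
      have le_x: "fle mu (xs n) x" unfolding xs_def fpos_def by (rule sup_least[OF a1 x0])
      then have g0: "fle mu 0 (x - xs n)" using fle_diff[of "xs n" x] by simp
      have a2: "fle mu (x - c n *\<^sub>R w) (xs n)" unfolding xs_def by (rule pos_ge)
      then have "fle mu (x - xs n) (c n *\<^sub>R w)" using fle_sub[OF a2, of x] by simp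
      then have "fle mu (x - xs n) (e *\<^sub>R w)" using cw[OF ce] by (rule ftrans)
      then show "mu (fabs mu (x - xs n)) (e *\<^sub>R w) > 1/2"
        using abs_pos_eq[OF g0] unfolding fle_def by simp
    qed
  qed
  have "(\<forall>n. xs n \<in> A) \<and> (\<forall>n. mu 0 (xs n) > 1/2)
                    \<and> (\<forall>m n. m \<le> n \<longrightarrow> fle mu (xs m) (xs n))
                    \<and> ru_converges mu xs x" using xsA pos mono rc by blast
  then show "x \<in> A" using spec[OF spec[OF H, of xs], of x] by (rule mp[rotated])
qed

lemma imp41:
  assumes I: "fuzzy_ideal mu A"
    and H: "\<forall>x w. fle mu 0 x \<and> fle mu 0 w
                  \<and> (\<forall>n::nat. n \<ge> 1 \<longrightarrow> fpos mu (real n *\<^sub>R x - w) \<in> A) \<longrightarrow> x \<in> A"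
  shows "quot_archimedean mu A"
  unfolding quot_archimedean_def fuzzy_archimedean_on_def
proof (intro ballI impI notI, elim conjE bexE)
  fix X u assume XS: "X \<in> quot_space A" and Xne: "X \<noteq> coset A 0"
    and X0: "quot_mu mu (coset A 0) X > 1/2" and uS: "u \<in> quot_space A"
    and B: "\<forall>l::real. l > 0 \<longrightarrow> quot_mu mu ((\<lambda>v. l *\<^sub>R v) ` X) u > 1/2"
  have S: "subspace A" using I unfolding fuzzy_ideal_def by blast
  obtain f where f: "X = coset A f" using XS unfolding quot_space_def by blast
  obtain g where g: "u = coset A g" using uS unfolding quot_space_def by blast
  have "\<exists>a\<in>coset A 0. \<exists>f1\<in>X. mu a f1 > 1/2" using quot_mu_gt[OF X0] Xne by blast
  then obtain a f1 where a0: "a \<in> coset A 0" and f1X: "f1 \<in> X" and af: "fle mu a f1"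
    unfolding fle_def by blast
  have a: "a \<in> A" using a0 by (simp add: mem_coset)
  have f1: "f1 - f \<in> A" using f1X unfolding f by (simp add: mem_coset)
  define x where "x = f1 - a"
  have x0: "fle mu 0 x" unfolding x_def using af fle_diff[of a f1] by simp
  have e: "f - x = a - (f1 - f)" unfolding x_def by (simp add: algebra_simps)
  have xf: "f - x \<in> A" unfolding e by (rule subspace_diff[OF S a f1])
  have Xx: "X = coset A x" unfolding f by (rule coset_eq[OF S, THEN iffD2, OF xf])
  define w where "w = fpos mu g"
  have w0: "fle mu 0 w" unfolding w_def by (rule pos_ge0)
  have gw: "fle mu g w" unfolding w_def by (rule pos_ge)
  have "fpos mu (real n *\<^sub>R x - w) \<in> A" if n: "n \<ge> 1" for n :: nat
  proof -
    have ln: "real n > 0" using n by simp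
    have img: "(\<lambda>v. real n *\<^sub>R v) ` X = coset A (real n *\<^sub>R x)"
      unfolding Xx by (rule coset_scale[OF S]) (use ln in linarith)
    have "quot_mu mu ((\<lambda>v. real n *\<^sub>R v) ` X) u > 1/2" using B ln by blast
    then have "quot_mu mu (coset A (real n *\<^sub>R x)) (coset A g) > 1/2" unfolding img g .
    then have disj: "coset A (real n *\<^sub>R x) = coset A g \<or> (\<exists>f1\<in>coset A (real n *\<^sub>R x). \<exists>g1\<in>coset A g. fle mu f1 g1)"
      unfolding fle_def by (rule quot_mu_gt)
    have mem: "real n *\<^sub>R x \<in> coset A (real n *\<^sub>R x)" unfolding mem_coset diff_self by (rule subspace_0[OF S])
    have "\<exists>f1\<in>coset A (real n *\<^sub>R x). \<exists>g1\<in>coset A g. fle mu f1 g1"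
      using disj
    proof (rule disjE)
      assume eq: "coset A (real n *\<^sub>R x) = coset A g"
      have m2: "real n *\<^sub>R x \<in> coset A g" using mem unfolding eq .
      show ?thesis
      proof (rule bexI[where x="real n *\<^sub>R x"])
        show "\<exists>g1\<in>coset A g. fle mu (real n *\<^sub>R x) g1"
        proof (rule bexI[where x="real n *\<^sub>R x"])
          show "fle mu (real n *\<^sub>R x) (real n *\<^sub>R x)" by (rule frefl)
          show "real n *\<^sub>R x \<in> coset A g" by (rule m2)
        qed
        show "real n *\<^sub>R x \<in> coset A (real n *\<^sub>R x)" by (rule mem)
      qed
    next
      assume "\<exists>f1\<in>coset A (real n *\<^sub>R x). \<exists>g1\<in>coset A g. fle mu f1 g1"
      then show ?thesis .
    qed
    then obtain fn gn where fn: "fn \<in> coset A (real n *\<^sub>R x)" and gn: "gn \<in> coset A g"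
      and fg: "fle mu fn gn" by blast
    define c where "c = (real n *\<^sub>R x - fn) + (gn - g)"
    have "fn - real n *\<^sub>R x \<in> A" "gn - g \<in> A" using fn gn by (simp_all add: mem_coset)
    then have "- (fn - real n *\<^sub>R x) + (gn - g) \<in> A" using S subspace_neg subspace_add by blast
    then have cA: "c \<in> A" unfolding c_def by simp
    have "fle mu (real n *\<^sub>R x - w) (real n *\<^sub>R x - g)"
      by (rule fle_sub[OF gw])
    moreover have "fle mu (real n *\<^sub>R x - g) c"
    proof -
      have "c - (real n *\<^sub>R x - g) = gn - fn" unfolding c_def by (simp add: algebra_simps)
      then show ?thesis using fg fle_diff[of fn gn] fle_diff[of "real n *\<^sub>R x - g" c] by simp
    qed
    ultimately have "fle mu (real n *\<^sub>R x - w) c" by (rule ftrans)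
    then have "fle mu (fpos mu (real n *\<^sub>R x - w)) (fpos mu c)"
      unfolding fpos_def by (rule sup_mono[OF _ frefl])
    then have "fle mu (fpos mu (real n *\<^sub>R x - w)) (fabs mu c)" using pos_le_abs by (rule ftrans)
    then show ?thesis using ideal_le[OF I cA pos_ge0] by blast
  qed
  then have "fle mu 0 x \<and> fle mu 0 w \<and> (\<forall>n::nat. n \<ge> 1 \<longrightarrow> fpos mu (real n *\<^sub>R x - w) \<in> A)"
    using x0 w0 by blast
  then have "x \<in> A" using spec[OF spec[OF H, of x], of w] by (rule mp[rotated])
  then have "x - 0 \<in> A" by simp
  then have "X = coset A 0" unfolding Xx by (rule coset_eq[OF S, THEN iffD2])
  then show False using Xne by simp
qed

end

theorem theorem3p8:
  fixes \<mu> :: "'a::real_vector \<Rightarrow> 'a \<Rightarrow> real" and A :: "'a set"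
  assumes "fuzzy_riesz_space \<mu>" and "fuzzy_ideal \<mu> A"
  shows "(quot_archimedean \<mu> A \<longleftrightarrow> uniformly_fuzzy_closed \<mu> A)
       \<and> (uniformly_fuzzy_closed \<mu> A \<longleftrightarrow>
            (\<forall>xs x. (\<forall>n. xs n \<in> A) \<and> (\<forall>n. \<mu> 0 (xs n) > 1/2)
                    \<and> (\<forall>m n. m \<le> n \<longrightarrow> fle \<mu> (xs m) (xs n))
                    \<and> ru_converges \<mu> xs x \<longrightarrow> x \<in> A))
       \<and> (uniformly_fuzzy_closed \<mu> A \<longleftrightarrow>
            (\<forall>x w. fle \<mu> 0 x \<and> fle \<mu> 0 w
                  \<and> (\<forall>n::nat. n \<ge> 1 \<longrightarrow> fpos \<mu> (real n *\<^sub>R x - w) \<in> A) \<longrightarrow> x \<in> A))"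
proof -
  interpret frs \<mu> by (rule frs.intro) fact
  have c23: "uniformly_fuzzy_closed \<mu> A \<Longrightarrow>
            (\<forall>xs x. (\<forall>n. xs n \<in> A) \<and> (\<forall>n. \<mu> 0 (xs n) > 1/2)
                    \<and> (\<forall>m n. m \<le> n \<longrightarrow> fle \<mu> (xs m) (xs n))
                    \<and> ru_converges \<mu> xs x \<longrightarrow> x \<in> A)"
    unfolding uniformly_fuzzy_closed_def by blast
  note i12 = imp12[OF assms(2)] and i34 = imp34[OF assms(2)] and i41 = imp41[OF assms(2)]
  show ?thesis
    apply (intro conjI iffI)
         apply (erule i12)
        apply (rule i41, rule i34, erule c23)
       apply (erule c23)
      apply (rule i12, rule i41, erule i34)
     apply (rule i34, erule c23)
    apply (rule i12, erule i41)
    done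
qed

end
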